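(* Let $f,g:\mathbb{R}^{N}\rightarrow (-\infty ,\infty ]$ be Borel measurable with $m_{f}:=\inf f\in \mathbb{R}$, $m_{g}:=\inf g\in \mathbb{R}$ and $m_{f}+m_{g}\geq 0$, and set $m_{f,g}:=(m_{f}-m_{g})/2$. Then $f\Box g\geq 0$, $\check{f}-m_{f,g}\geq 0$, $\check{g}+m_{f,g}\geq 0$, and $$\|(f\Box g)^{-1}\|_{\phi }\leq 2^{N-1}\left(\|(\check{f}-m_{f,g})^{-1}\|_{\phi }+\|(\check{g}+m_{f,g})^{-1}\|_{\phi }\right)$$ for every Young function $\phi$.
   Context: $(f\Box g)(x):=\inf_{y\in \mathbb{R}^{N}}(f(x-y)+g(y))$. For $h\ge0$, $h^{-1}:=1/h$ (with $1/0=\infty$, $1/\infty=0$). A Young function is a nonconstant $\phi:[0,\infty]\to[0,\infty]$ with $\phi(0)=0$, nondecreasing, convex and left continuous; the Luxemburg norm of a measurable $h$ is $\|h\|_{\phi}:=\inf\{r>0:\int_{\mathbb{R}^N}\phi(r^{-1}|h|)\le 1\}$ ($=\infty$ if no such $r$). Enclosing balls: for $X\subset\mathbb{R}^N$ nonempty and bounded, $\overline{B}_X$ is the unique closed ball of minimal diameter containing $X$; if $X$ is unbounded, $\overline{B}_X:=\mathbb{R}^N$; $\overline{B}_\emptyset:=\{0\}$. For $f:\mathbb{R}^N\to[-\infty,\infty]$ and $\xi\in[-\infty,\infty]$ let $F^-_\xi:=\{x: f(x)<\xi\}$, let $\rho^-_f(\xi)\in[0,\infty]$ be the radius of $\overline{B}_{F^-_\xi}$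 ($\infty$ if it is $\mathbb{R}^N$), let $\gamma^-_f(t):=\sup\{\xi:\rho^-_f(\xi)\le t\}$ for $t\in[0,\infty)$, and $\check f(x):=\gamma^-_f(|x|)$. (Equivalently $\check f=-\widehat{(-f)}$ where $\hat f(x)=\gamma^+_f(|x|)$, $\gamma^+_f(t)=\inf\{\xi:\rho^+_f(\xi)\le t\}$, $\rho^+_f(\xi)$ the radius of the enclosing ball of $\{f>\xi\}$.) *)

theory Defs
  imports "HOL-Analysis.Analysis"
begin

definition inf_conv :: "('a::real_vector \<Rightarrow> ereal) \<Rightarrow> ('a \<Rightarrow> ereal) \<Rightarrow> 'a \<Rightarrow> ereal" where
  "inf_conv f g x = (INF y. f (x - y) + g y)"

text \<open>Reciprocal of a nonnegative extended real, with 1/0 = infinity and 1/infinity = 0.\<close>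
definition recip :: "ereal \<Rightarrow> ennreal" where
  "recip t = inverse (e2ennreal t)"

definition young_function :: "(ennreal \<Rightarrow> ennreal) \<Rightarrow> bool" where
  "young_function \<phi> \<longleftrightarrow>
     (\<exists>x y. \<phi> x \<noteq> \<phi> y) \<and> \<phi> 0 = 0 \<and> mono \<phi> \<and>
     (\<forall>x y t. t \<le> 1 \<longrightarrow> \<phi> (t * x + (1 - t) * y) \<le> t * \<phi> x + (1 - t) * \<phi> y) \<and>
     (\<forall>x. (\<phi> \<longlongrightarrow> \<phi> x) (at_left x))"

text \<open>Luxemburg norm w.r.t. Lebesgue measure (infimum of the empty set is infinity).\<close>
definition lux_norm :: "(ennreal \<Rightarrow> ennreal) \<Rightarrow> ('a::euclidean_space \<Rightarrow> ennreal) \<Rightarrow> ennreal" where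
  "lux_norm \<phi> h = Inf {ennreal r | r. r > 0 \<and>
      (\<integral>\<^sup>+ x. \<phi> (ennreal (1 / r) * h x) \<partial>lebesgue) \<le> 1}"

definition enclosing_ball :: "'a::euclidean_space set \<Rightarrow> 'a set" where
  "enclosing_ball X =
     (if X = {} then {0}
      else if \<not> bounded X then UNIV
      else (THE B. (\<exists>c r. B = cball c r) \<and> X \<subseteq> B \<and>
                   (\<forall>c' r'. X \<subseteq> cball c' r' \<longrightarrow> diameter B \<le> diameter (cball c' r'))))"

definition enc_radius :: "'a::euclidean_space set \<Rightarrow> ereal" where
  "enc_radius X = (if enclosing_ball X = UNIV then \<infinity> else ereal (diameter (enclosing_ball X) / 2))"

definition rho_minus :: "('a::euclidean_space \<Rightarrow> ereal) \<Rightarrow> ereal \<Rightarrow> ereal" where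
  "rho_minus f \<xi> = enc_radius {x. f x < \<xi>}"

definition gamma_minus :: "('a::euclidean_space \<Rightarrow> ereal) \<Rightarrow> real \<Rightarrow> ereal" where
  "gamma_minus f t = Sup {\<xi>. rho_minus f \<xi> \<le> ereal t}"

definition check :: "('a::euclidean_space \<Rightarrow> ereal) \<Rightarrow> 'a \<Rightarrow> ereal" where
  "check f x = gamma_minus f (norm x)"

end

theory Submission
  imports Defs
begin


definition maxd :: "'a::euclidean_space set \<Rightarrow> 'a \<Rightarrow> real" where
  "maxd X c = (SUP x\<in>X. dist c x)"

lemma maxd_ge: "bounded X \<Longrightarrow> x \<in> X \<Longrightarrow> dist c x \<le> maxd X c"
  unfolding maxd_def
  by (intro cSUP_upper) (auto simp: bounded_any_center[of X c] bdd_above_def)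

lemma maxd_le: "X \<noteq> {} \<Longrightarrow> (\<And>x. x \<in> X \<Longrightarrow> dist c x \<le> r) \<Longrightarrow> maxd X c \<le> r"
  unfolding maxd_def by (intro cSUP_least) auto

lemma maxd_lip: "bounded X \<Longrightarrow> X \<noteq> {} \<Longrightarrow> maxd X c \<le> maxd X c' + dist c c'"
proof -
  assume b: "bounded X" and ne: "X \<noteq> {}"
  show ?thesis
  proof (rule maxd_le[OF ne])
    fix x assume "x \<in> X"
    have "dist c x \<le> dist c c' + dist c' x" by (rule dist_triangle)
    also have "\<dots> \<le> dist c c' + maxd X c'" using maxd_ge[OF b \<open>x\<in>X\<close>] by simp
    finally show "dist c x \<le> maxd X c' + dist c c'" by simp
  qed
qed

lemma maxd_cont: "bounded X \<Longrightarrow> X \<noteq> {} \<Longrightarrow> continuous_on S (maxd X)"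
proof -
  assume b: "bounded X" and ne: "X \<noteq> {}"
  have "lipschitz_on 1 S (maxd X)"
  proof (rule lipschitz_onI)
    fix c c' assume "c \<in> S" "c' \<in> S"
    have "maxd X c \<le> maxd X c' + dist c c'" "maxd X c' \<le> maxd X c + dist c' c"
      using maxd_lip[OF b ne] by auto
    then show "dist (maxd X c) (maxd X c') \<le> 1 * dist c c'"
      by (simp add: dist_real_def dist_commute abs_le_iff)
  qed simp
  then show ?thesis by (rule lipschitz_on_continuous_on)
qed

lemma maxd_min_exists:
  assumes b: "bounded X" and ne: "X \<noteq> {}"
  shows "\<exists>c0. \<forall>c. maxd X c0 \<le> maxd X c"
proof -
  obtain x0 where x0: "x0 \<in> X" using ne by auto
  let ?K = "cball x0 (maxd X x0)"
  have cK: "compact ?K" by simp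
  have "x0 \<in> ?K" using maxd_ge[OF b x0, of x0] by simp
  then have neK: "?K \<noteq> {}" by blast
  obtain c0 where c0: "c0 \<in> ?K" "\<And>c. c \<in> ?K \<Longrightarrow> maxd X c0 \<le> maxd X c"
    using continuous_attains_inf[OF cK neK maxd_cont[OF b ne]] by blast
  have "maxd X c0 \<le> maxd X c" for c
  proof (cases "c \<in> ?K")
    case True then show ?thesis using c0 by auto
  next
    case False
    then have "maxd X x0 < dist x0 c" by simp
    also have "\<dots> \<le> maxd X c" using maxd_ge[OF b x0, of c] by (simp add: dist_commute)
    finally show ?thesis using c0(2)[of x0] maxd_ge[OF b x0, of x0] by simp
  qed
  then show ?thesis by blast
qed

lemma midpoint_aux: "(A::real) = S / 4 \<Longrightarrow> D = T \<Longrightarrow> S + T = 2*P + 2*Q \<Longrightarrow> P1 = P \<Longrightarrow> Q1 = Q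
  \<Longrightarrow> A = (P1 + Q1)/2 - D/4"
  by argo

lemma midpoint_dist_sq:
  fixes a b x :: "'a::euclidean_space"
  shows "(dist ((a + b) /\<^sub>R 2) x)^2 = ((dist a x)^2 + (dist b x)^2)/2 - (dist a b)^2/4"
proof -
  have "(dist ((a + b) /\<^sub>R 2) x)^2 = (norm ((a - x) + (b - x)))^2 / 4"
  proof -
    have "(a + b) /\<^sub>R 2 - x = ((a - x) + (b - x)) /\<^sub>R 2" by (simp add: algebra_simps flip: scaleR_add_left)
    then show ?thesis by (simp add: dist_norm power_divide)
  qed
  moreover have "(dist a b)^2 = (norm ((a - x) - (b - x)))^2" by (simp add: dist_norm)
  moreover have "(norm ((a - x) + (b - x)))^2 + (norm ((a - x) - (b - x)))^2
      = 2 * (norm (a - x))^2 + 2 * (norm (b - x))^2"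
    by (simp add: power2_norm_eq_inner inner_add_left inner_add_right inner_diff_left inner_diff_right inner_commute)
  moreover have "(dist a x)^2 = (norm (a - x))^2" "(dist b x)^2 = (norm (b - x))^2"
    by (simp_all add: dist_norm)
  ultimately show ?thesis by (rule midpoint_aux)
qed

lemma maxd_unique_center:
  assumes b: "bounded X" and ne: "X \<noteq> {}"
    and m1: "\<forall>c. maxd X c1 \<le> maxd X c" and eq: "maxd X c2 = maxd X c1"
  shows "c2 = c1"
proof (rule ccontr)
  assume neq: "c2 \<noteq> c1"
  let ?r = "maxd X c1" and ?m = "(c1 + c2) /\<^sub>R 2" and ?d = "dist c1 c2"
  have dpos: "?d > 0" using neq by simp
  obtain x1 where x1: "x1 \<in> X" using ne by auto
  have r0: "?r \<ge> 0" using maxd_ge[OF b x1, of c1] zero_le_dist[of c1 x1] by linarith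
  have "maxd X ?m \<le> sqrt (?r^2 - ?d^2/4)"
  proof (rule maxd_le[OF ne])
    fix x assume x: "x \<in> X"
    have h1: "dist c1 x \<le> ?r" using maxd_ge[OF b x] by simp
    have h2: "dist c2 x \<le> ?r" using maxd_ge[OF b x, of c2] eq by simp
    have "(dist c1 x)^2 \<le> ?r^2" using h1 by (simp add: power_mono)
    moreover have "(dist c2 x)^2 \<le> ?r^2" using h2 by (simp add: power_mono)
    ultimately have "(dist ?m x)^2 \<le> ?r^2 - ?d^2/4"
      using midpoint_dist_sq[of c1 c2 x] by simp
    then show "dist ?m x \<le> sqrt (?r^2 - ?d^2/4)"
      by (simp add: real_le_rsqrt)
  qed
  also have "\<dots> < ?r"
  proof -
    have "?r^2 - ?d^2/4 < ?r^2" using dpos by simp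
    then have "sqrt (?r^2 - ?d^2/4) < sqrt (?r^2)" by (simp only: real_sqrt_less_iff)
    then show ?thesis using r0 by simp
  qed
  finally show False using m1 by (meson not_le)
qed

lemma enclosing_ball_char:
  fixes X :: "'a::euclidean_space set"
  assumes b: "bounded X" and ne: "X \<noteq> {}"
  shows "\<exists>c r. r \<ge> 0 \<and> enclosing_ball X = cball c r \<and> enc_radius X = ereal r \<and> X \<subseteq> cball c r
     \<and> (\<forall>c' r'. X \<subseteq> cball c' r' \<longrightarrow> r \<le> r')"
proof -
  obtain c0 where c0: "\<forall>c. maxd X c0 \<le> maxd X c" using maxd_min_exists[OF b ne] by blast
  define r0 where "r0 = maxd X c0"
  obtain x0 where x0: "x0 \<in> X" using ne by auto
  have r0pos: "r0 \<ge> 0" unfolding r0_def using maxd_ge[OF b x0, of c0] zero_le_dist[of c0 x0] by linarith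
  have sub: "X \<subseteq> cball c0 r0" unfolding r0_def using maxd_ge[OF b] by auto
  have minr: "r0 \<le> r'" if "X \<subseteq> cball c' r'" for c' r'
  proof -
    have "maxd X c' \<le> r'" using that by (intro maxd_le[OF ne]) auto
    then show ?thesis unfolding r0_def using c0 by (meson order.trans)
  qed
  have rpos': "r' \<ge> 0" if "X \<subseteq> cball c' r'" for c' r'
  proof -
    have "dist c' x0 \<le> r'" using that x0 by auto
    then show ?thesis using zero_le_dist[of c' x0] by linarith
  qed
  let ?P = "\<lambda>B. (\<exists>c r. B = cball c r) \<and> X \<subseteq> B \<and>
                   (\<forall>c' r'. X \<subseteq> cball c' r' \<longrightarrow> diameter B \<le> diameter (cball c' r'))"
  have P0: "?P (cball c0 r0)"
  proof (intro conjI allI impI)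
    show "\<exists>c r. cball c0 r0 = cball c r" by blast
    show "X \<subseteq> cball c0 r0" by (rule sub)
    fix c' r' assume a: "X \<subseteq> cball c' r'"
    have "r0 \<le> r'" "0 \<le> r'" using minr[OF a] rpos'[OF a] by auto
    then show "diameter (cball c0 r0) \<le> diameter (cball c' r')" using r0pos by simp
  qed
  have uniq: "B = cball c0 r0" if "?P B" for B
  proof -
    from that obtain c r where B: "B = cball c r" and XB: "X \<subseteq> cball c r"
      and mn: "\<forall>c' r'. X \<subseteq> cball c' r' \<longrightarrow> diameter B \<le> diameter (cball c' r')" by auto
    have rp: "r \<ge> 0" using rpos'[OF XB] .
    have "diameter B \<le> diameter (cball c0 r0)" using mn sub by auto
    then have "r \<le> r0" using B rp r0pos by simp
    moreover have "maxd X c \<le> r" using XB by (intro maxd_le[OF ne]) auto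
    moreover have "r0 \<le> maxd X c" unfolding r0_def using c0 by auto
    ultimately have "r = r0" "maxd X c = maxd X c0" unfolding r0_def by auto
    then have "c = c0" using maxd_unique_center[OF b ne c0] by auto
    then show ?thesis using B \<open>r = r0\<close> by simp
  qed
  have th: "(THE B. ?P B) = cball c0 r0" by (rule the_equality) (use P0 uniq in auto)
  have eb: "enclosing_ball X = cball c0 r0"
    unfolding enclosing_ball_def using ne b th by simp
  have "cball c0 r0 \<noteq> UNIV" using bounded_cball[of c0 r0] not_bounded_UNIV by metis
  then have "enc_radius X = ereal r0" unfolding enc_radius_def eb using r0pos by simp
  then show ?thesis using eb r0pos sub minr by blast
qed

lemma enc_radius_empty: "enc_radius ({}::'a::euclidean_space set) = 0"
proof -
  have "{0::'a} \<noteq> UNIV" using not_bounded_UNIV[where 'a='a] by (metis bounded_insert bounded_empty)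
  then show ?thesis unfolding enc_radius_def enclosing_ball_def by (simp add: zero_ereal_def)
qed

lemma enc_radius_unbounded: "\<not> bounded X \<Longrightarrow> enc_radius X = \<infinity>"
  unfolding enc_radius_def enclosing_ball_def by auto

lemma enc_radius_nonneg: "enc_radius (X::'a::euclidean_space set) \<ge> 0"
proof (cases "X = {}")
  case True then show ?thesis by (simp add: enc_radius_empty)
next
  case False
  show ?thesis
  proof (cases "bounded X")
    case True then show ?thesis using enclosing_ball_char[OF True False] by auto
  qed (simp add: enc_radius_unbounded)
qed

lemma enc_radius_mono:
  fixes X Y :: "'a::euclidean_space set"
  assumes "X \<subseteq> Y" shows "enc_radius X \<le> enc_radius Y"
proof (cases "X = {}")
  case True then show ?thesis using enc_radius_nonneg[of Y] by (simp add: enc_radius_empty)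
next
  case XN: False
  show ?thesis
  proof (cases "bounded Y")
    case False then show ?thesis by (simp add: enc_radius_unbounded)
  next
    case bY: True
    have bX: "bounded X" using bounded_subset[OF bY assms] .
    have YN: "Y \<noteq> {}" using XN assms by auto
    obtain cY rY where Y: "enc_radius Y = ereal rY" "Y \<subseteq> cball cY rY"
      using enclosing_ball_char[OF bY YN] by blast
    obtain cX rX where X: "enc_radius X = ereal rX" "\<forall>c' r'. X \<subseteq> cball c' r' \<longrightarrow> rX \<le> r'"
      using enclosing_ball_char[OF bX XN] by blast
    have "rX \<le> rY" using X(2) Y(2) assms by blast
    then show ?thesis using X Y by simp
  qed
qed




lemma recip_antimono: "y \<le> y' \<Longrightarrow> recip y' \<le> recip y"
  unfolding recip_def
  using e2ennreal_mono ereal_inverse_antimono inverse_ennreal.rep_eq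
    less_eq_ennreal.rep_eq by auto

lemma recip_inf[simp]: "recip \<infinity> = 0"
  unfolding recip_def by (simp add: top_ereal_def[symmetric] flip: top_ennreal.abs_eq e2ennreal_def)

lemma recip_pos: "a > 0 \<Longrightarrow> recip (ereal a) = ennreal (1/a)"
  unfolding recip_def by (simp add: inverse_ennreal inverse_eq_divide)

lemma recip_nonpos: "a \<le> 0 \<Longrightarrow> recip (ereal a) = top"
  unfolding recip_def by (simp add: ennreal_neg)

definition Phi :: "(ennreal \<Rightarrow> ennreal) \<Rightarrow> real \<Rightarrow> ereal \<Rightarrow> ennreal" where
  "Phi \<phi> r y = \<phi> (ennreal (1/r) * recip y)"

lemma young_mono: "young_function \<phi> \<Longrightarrow> mono \<phi>"
  unfolding young_function_def by auto
lemma young_0: "young_function \<phi> \<Longrightarrow> \<phi> 0 = 0"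
  unfolding young_function_def by auto

lemma Phi_antimono: "young_function \<phi> \<Longrightarrow> y \<le> y' \<Longrightarrow> Phi \<phi> r y' \<le> Phi \<phi> r y"
  unfolding Phi_def using young_mono recip_antimono
  by (metis monoD mult_left_mono zero_le)

lemma Phi_inf: "young_function \<phi> \<Longrightarrow> Phi \<phi> r \<infinity> = 0"
  unfolding Phi_def by (simp add: young_0)

lemma Phi_right_open:
  assumes y: "young_function \<phi>" and r: "r > 0" and t: "ennreal t < Phi \<phi> r (ereal y)"
  shows "\<exists>a>y. ennreal t < Phi \<phi> r (ereal a)"
proof (cases "y < 0")
  case True
  then have "recip (ereal (y/2)) = recip (ereal y)" by (simp add: recip_nonpos)
  then show ?thesis using t True by (intro exI[of _ "y/2"]) (simp add: Phi_def)
next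
  case False
  then have y0: "y \<ge> 0" by simp
  define z where "z = ennreal (1/r) * recip (ereal y)"
  have tz: "ennreal t < \<phi> z" using t unfolding Phi_def z_def .
  have z0: "0 < z"
  proof (rule ccontr)
    assume "\<not> 0 < z" then have "z = 0" by (simp add: not_less)
    then show False using tz young_0[OF y] by simp
  qed
  have lc: "(\<phi> \<longlongrightarrow> \<phi> z) (at_left z)" using y unfolding young_function_def by auto
  have "eventually (\<lambda>w. ennreal t < \<phi> w) (at_left z)"
    using order_tendstoD(1)[OF lc tz] .
  then have "\<exists>b<z. \<forall>w>b. w < z \<longrightarrow> ennreal t < \<phi> w"
    by (simp only: eventually_at_left[OF z0])
  then obtain b where b: "b < z" "\<And>w. b < w \<Longrightarrow> w < z \<Longrightarrow> ennreal t < \<phi> w"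
    by blast
  obtain z' where z': "b < z'" "z' < z" using dense[OF b(1)] by blast
  have tz': "ennreal t < \<phi> z'" using b(2)[OF z'] .
  have "z' \<noteq> top" using z'(2) top.not_eq_extremum by fastforce
  then obtain w where w: "z' = ennreal w" "w \<ge> 0" by (cases z' rule: ennreal_cases) auto
  show ?thesis
  proof (cases "w = 0")
    case True
    have "z' \<le> ennreal (1/r) * recip (ereal (y+1))" using w True by simp
    then have "\<phi> z' \<le> Phi \<phi> r (ereal (y+1))" unfolding Phi_def using young_mono[OF y] by (simp add: monoD)
    then show ?thesis using tz' by (intro exI[of _ "y+1"]) auto
  next
    case False
    then have wp: "w > 0" using w by simp
    define a where "a = 1/(r*w)"
    have ap: "a > 0" unfolding a_def using wp r by simp
    have ay: "y < a"
    proof (cases "y = 0")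
      case True then show ?thesis using ap by simp
    next
      case False
      then have yp: "y > 0" using y0 by simp
      have "z = ennreal (1/(r*y))" unfolding z_def using yp r
        by (simp add: recip_pos ennreal_mult'' [symmetric])
      then have "w < 1/(r*y)" using z'(2) w by (simp add: ennreal_less_iff)
      then have "w * (r*y) < 1" using r yp by (simp add: field_simps)
      then show ?thesis unfolding a_def using r wp yp by (simp add: field_simps)
    qed
    have "ennreal (1/r) * recip (ereal a) = ennreal (1/r * (1/a))"
      using ap r by (simp add: recip_pos ennreal_mult'' [symmetric])
    also have "1/r * (1/a) = w" unfolding a_def using r wp by simp
    finally have "Phi \<phi> r (ereal a) = \<phi> z'" unfolding Phi_def w by simp
    then show ?thesis using tz' ay by auto
  qed
qed

lemma rho_mono: "\<xi> \<le> \<xi>' \<Longrightarrow> rho_minus f \<xi> \<le> rho_minus f \<xi>'"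
  unfolding rho_minus_def by (rule enc_radius_mono) auto

lemma gamma_mono: "s \<le> s' \<Longrightarrow> gamma_minus f s \<le> gamma_minus f s'"
  unfolding gamma_minus_def by (rule Sup_subset_mono) (auto intro: order.trans)

lemma check_le:
  assumes "ereal (norm x) < rho_minus f \<alpha>" shows "check f x \<le> \<alpha>"
  unfolding check_def gamma_minus_def
proof (rule Sup_least)
  fix \<xi> assume "\<xi> \<in> {\<xi>. rho_minus f \<xi> \<le> ereal (norm x)}"
  then have h: "rho_minus f \<xi> \<le> ereal (norm x)" by simp
  show "\<xi> \<le> \<alpha>"
  proof (rule ccontr)
    assume "\<not> \<xi> \<le> \<alpha>"
    then have "rho_minus f \<alpha> \<le> rho_minus f \<xi>" by (intro rho_mono) simp
    then show False using h assms by simp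
  qed
qed

lemma check_ge:
  assumes mf: "Inf (range f) = ereal mf" shows "ereal mf \<le> check f x"
proof -
  have "{u. f u < ereal mf} = {}" using mf by (auto simp: not_less) (metis INF_lower UNIV_I not_le)
  then have "rho_minus f (ereal mf) = 0" unfolding rho_minus_def by (simp add: enc_radius_empty)
  then have "rho_minus f (ereal mf) \<le> ereal (norm x)" by simp
  then show ?thesis unfolding check_def gamma_minus_def by (intro Sup_upper) simp
qed




lemma down_closed_borel:
  fixes D :: "real set"
  assumes dc: "\<And>x y. y \<in> D \<Longrightarrow> x \<le> y \<Longrightarrow> x \<in> D"
  shows "D \<in> sets borel"
proof -
  have "mono (\<lambda>s. - indicator D s :: real)"
    unfolding mono_def indicator_def using dc by auto
  then have m: "(\<lambda>s. - indicator D s :: real) \<in> borel_measurable borel" by (rule borel_measurable_mono)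
  have "D = (\<lambda>s. - indicator D s :: real) -` {-1} \<inter> space borel" by (auto simp: indicator_def)
  also have "\<dots> \<in> sets borel" by (rule measurable_sets[OF m]) simp
  finally show ?thesis .
qed

lemma antimono_borel:
  fixes \<psi> :: "real \<Rightarrow> ennreal"
  assumes am: "\<And>s s'. s \<le> s' \<Longrightarrow> \<psi> s' \<le> \<psi> s"
  shows "\<psi> \<in> borel_measurable borel"
proof (rule borel_measurableI_greater)
  fix y
  have "{x. y < \<psi> x} \<in> sets borel"
    by (rule down_closed_borel) (use am in \<open>auto intro: less_le_trans\<close>)
  then show "{x \<in> space borel. y < \<psi> x} \<in> sets borel" by simp
qed

lemma radial_meas:
  fixes \<psi> :: "real \<Rightarrow> ennreal"
  assumes am: "\<And>s s'. s \<le> s' \<Longrightarrow> \<psi> s' \<le> \<psi> s"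
  shows "(\<lambda>x::'a::euclidean_space. \<psi> (norm x)) \<in> borel_measurable lebesgue"
proof -
  have pm: "\<psi> \<in> borel_measurable borel" by (rule antimono_borel) (rule am)
  have "(\<lambda>x::'a. \<psi> (norm x)) \<in> borel_measurable borel"
    using measurable_compose[OF borel_measurable_norm pm] by simp
  then have "(\<lambda>x::'a. \<psi> (norm x)) \<in> borel_measurable lborel" by simp
  then show ?thesis by (rule measurable_completion)
qed

lemma sf_lebesgue: "sigma_finite_measure (lebesgue :: 'a::euclidean_space measure)"
proof
  show "\<exists>A::'a set set. countable A \<and> A \<subseteq> sets lebesgue \<and> \<Union>A = space lebesgue \<and> (\<forall>a\<in>A. emeasure lebesgue a \<noteq> \<infinity>)"
  proof (intro exI conjI)
    let ?A = "range (\<lambda>n::nat. cball (0::'a) (real n))"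
    show "countable ?A" by simp
    show "?A \<subseteq> sets lebesgue" by auto
    show "\<Union>?A = space lebesgue"
    proof -
      have "x \<in> \<Union>?A" for x :: 'a
      proof -
        obtain n :: nat where "norm x \<le> real n" using real_arch_simple by blast
        then show ?thesis by auto
      qed
      then show ?thesis by auto
    qed
    show "\<forall>a\<in>?A. emeasure lebesgue a \<noteq> \<infinity>"
      using emeasure_lborel_cball_finite by (auto simp: less_top)
  qed
qed

lemma emeasure_Ici_top: "emeasure lborel {0::real..} = top"
proof (rule ccontr)
  assume "emeasure lborel {0::real..} \<noteq> top"
  then obtain c where c: "emeasure lborel {0::real..} = ennreal c" "c \<ge> 0"
    by (cases "emeasure lborel {0::real..}" rule: ennreal_cases) auto
  have "emeasure lborel {0::real..c+1} \<le> emeasure lborel {0::real..}"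
    by (rule emeasure_mono) auto
  then have "ennreal (c+1) \<le> ennreal c" using c by simp
  then show False using c by (simp add: ennreal_le_iff)
qed

lemma layer_cake:
  assumes sf: "sigma_finite_measure M" and w[measurable]: "w \<in> borel_measurable M"
  shows "(\<integral>\<^sup>+x. w x \<partial>M) = (\<integral>\<^sup>+t. indicator {0..} t * emeasure M {x \<in> space M. ennreal t < w x} \<partial>lborel)"
proof -
  interpret p: pair_sigma_finite M lborel
    using sf by (simp add: pair_sigma_finite_def lborel.sigma_finite_measure_axioms)
  define G where "G = (\<lambda>(x, t::real). if 0 \<le> t \<and> ennreal t < w x then 1 else (0::ennreal))"
  have Gm: "G \<in> borel_measurable (M \<Otimes>\<^sub>M lborel)" unfolding G_def by measurable
  have pt: "w x = (\<integral>\<^sup>+t. G (x, t) \<partial>lborel)" for x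
  proof -
    have "(\<integral>\<^sup>+t. G (x, t) \<partial>lborel) = (\<integral>\<^sup>+t. indicator {t. 0 \<le> t \<and> ennreal t < w x} t \<partial>lborel)"
      unfolding G_def by (intro nn_integral_cong) (auto simp: indicator_def)
    also have "\<dots> = emeasure lborel {t. 0 \<le> t \<and> ennreal t < w x}"
      by (intro nn_integral_indicator) measurable
    also have "\<dots> = w x"
    proof (cases "w x" rule: ennreal_cases)
      case (real c)
      then have "{t. 0 \<le> t \<and> ennreal t < w x} = {0..<c}" by (auto simp: ennreal_less_iff)
      then show ?thesis using real by simp
    next
      case top
      then have "{t. 0 \<le> t \<and> ennreal t < w x} = {0..}" by auto
      then show ?thesis using top emeasure_Ici_top by simp
    qed
    finally show ?thesis by simp
  qed
  have "(\<integral>\<^sup>+x. w x \<partial>M) = (\<integral>\<^sup>+x. (\<integral>\<^sup>+t. G (x, t) \<partial>lborel) \<partial>M)"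
    using pt by simp
  also have "\<dots> = (\<integral>\<^sup>+t. (\<integral>\<^sup>+x. G (x, t) \<partial>M) \<partial>lborel)"
    using p.Fubini[OF Gm] by simp
  also have "\<dots> = (\<integral>\<^sup>+t. indicator {0..} t * emeasure M {x \<in> space M. ennreal t < w x} \<partial>lborel)"
  proof (intro nn_integral_cong)
    fix t :: real
    show "(\<integral>\<^sup>+x. G (x, t) \<partial>M) = indicator {0..} t * emeasure M {x \<in> space M. ennreal t < w x}"
    proof (cases "0 \<le> t")
      case True
      have "(\<integral>\<^sup>+x. G (x, t) \<partial>M) = (\<integral>\<^sup>+x. indicator {x \<in> space M. ennreal t < w x} x \<partial>M)"
        unfolding G_def using True by (intro nn_integral_cong) (auto simp: indicator_def)
      also have "\<dots> = emeasure M {x \<in> space M. ennreal t < w x}"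
        by (intro nn_integral_indicator) measurable
      finally show ?thesis using True by simp
    next
      case False
      then show ?thesis unfolding G_def by simp
    qed
  qed
  finally show ?thesis .
qed




lemma cofinal_seq:
  fixes A :: "real set"
  assumes ne: "A \<noteq> {}" and dc: "\<And>a a'. a \<in> A \<Longrightarrow> a' \<le> a \<Longrightarrow> a' \<in> A"
    and nm: "\<And>a. a \<in> A \<Longrightarrow> \<exists>a'\<in>A. a < a'"
  shows "\<exists>s. incseq s \<and> (\<forall>n. s n \<in> A) \<and> (\<forall>a\<in>A. \<exists>n. a \<le> s n)"
proof (cases "bdd_above A")
  case True
  define S where "S = Sup A"
  define s where "s n = S - 1 / (real n + 1)" for n :: nat
  have "incseq s" unfolding s_def
    by (intro incseq_SucI) (simp add: field_simps)
  moreover have "s n \<in> A" for n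
  proof -
    have "s n < S" unfolding s_def by simp
    then obtain a where "a \<in> A" "s n < a" using less_cSup_iff[OF ne True] unfolding S_def by blast
    then show ?thesis using dc by auto
  qed
  moreover have "\<exists>n. a \<le> s n" if a: "a \<in> A" for a
  proof -
    obtain a' where "a' \<in> A" "a < a'" using nm[OF a] by blast
    then have "a < S" unfolding S_def using cSup_upper[OF _ True] by fastforce
    then obtain n where "inverse (real (Suc n)) < S - a" using reals_Archimedean[of "S - a"] by auto
    then have "a \<le> s n" unfolding s_def by (simp add: inverse_eq_divide add.commute)
    then show ?thesis by blast
  qed
  ultimately show ?thesis by blast
next
  case False
  define s where "s n = real n" for n :: nat
  have "incseq s" unfolding s_def by (simp add: incseq_def)
  moreover have "s n \<in> A" for n
  proof -
    obtain a where "a \<in> A" "real n < a" using False unfolding bdd_above_def by (auto simp: not_le)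
    then show ?thesis unfolding s_def using dc by auto
  qed
  moreover have "\<exists>n. a \<le> s n" for a
    unfolding s_def using real_arch_simple by blast
  ultimately show ?thesis by blast
qed

lemma cover_bound:
  fixes S :: "real \<Rightarrow> 'a set"
  assumes monoS: "\<And>a a'. a \<le> a' \<Longrightarrow> S a \<subseteq> S a'"
    and dc: "\<And>a a'. a \<in> A \<Longrightarrow> a' \<le> a \<Longrightarrow> a' \<in> A"
    and nm: "\<And>a. a \<in> A \<Longrightarrow> \<exists>a'\<in>A. a < a'"
    and Bex: "\<And>a. a \<in> A \<Longrightarrow> \<exists>B\<in>sets M. S a \<subseteq> B \<and> emeasure M B \<le> C"
    and Em: "E \<in> sets M" and ES: "E \<subseteq> (\<Union>a\<in>A. S a)"
  shows "emeasure M E \<le> C"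
proof (cases "A = {}")
  case True
  then have "E = {}" using ES by auto
  then show ?thesis by simp
next
  case False
  have "\<exists>s. incseq s \<and> (\<forall>n. s n \<in> A) \<and> (\<forall>a\<in>A. \<exists>n. a \<le> s n)"
  proof (rule cofinal_seq)
    show "A \<noteq> {}" by (rule False)
    show "\<And>a a'. a \<in> A \<Longrightarrow> a' \<le> a \<Longrightarrow> a' \<in> A" by (rule dc)
    show "\<And>a. a \<in> A \<Longrightarrow> \<exists>a'\<in>A. a < a'" by (rule nm)
  qed
  then obtain s where s: "incseq s" "\<And>n. s n \<in> A" "\<And>a. a \<in> A \<Longrightarrow> \<exists>n. a \<le> s n"
    by blast
  have "\<forall>n. \<exists>B. B \<in> sets M \<and> S (s n) \<subseteq> B \<and> emeasure M B \<le> C" using Bex s(2) by blast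
  then obtain Bn where Bn: "\<And>n. Bn n \<in> sets M" "\<And>n. S (s n) \<subseteq> Bn n" "\<And>n. emeasure M (Bn n) \<le> C"
    by metis
  define T where "T n = (\<Inter>m\<in>{n..}. Bn m)" for n
  have Tm: "T n \<in> sets M" for n unfolding T_def
    by (intro sets.countable_INT') (auto simp: Bn(1))
  have Tinc: "incseq T" unfolding T_def by (intro incseq_SucI) auto
  have ET: "E \<subseteq> (\<Union>n. T n)"
  proof
    fix x assume "x \<in> E"
    then obtain a where a: "a \<in> A" "x \<in> S a" using ES by blast
    obtain n where n: "a \<le> s n" using s(3)[OF a(1)] by blast
    have "x \<in> Bn m" if "m \<ge> n" for m
    proof -
      have "s n \<le> s m" using s(1) that by (simp add: incseq_def)
      then have "S a \<subseteq> S (s m)" using n monoS by auto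
      then show ?thesis using a(2) Bn(2)[of m] by blast
    qed
    then have "x \<in> T n" unfolding T_def by auto
    then show "x \<in> (\<Union>n. T n)" by blast
  qed
  have "emeasure M E \<le> emeasure M (\<Union>n. T n)"
    by (rule emeasure_mono[OF ET]) (use Tm in auto)
  also have "\<dots> = (SUP n. emeasure M (T n))"
    by (rule SUP_emeasure_incseq[symmetric]) (use Tm Tinc in auto)
  also have "\<dots> \<le> C"
  proof (rule SUP_least)
    fix n
    have "T n \<subseteq> Bn n" unfolding T_def by auto
    then have "emeasure M (T n) \<le> emeasure M (Bn n)" by (rule emeasure_mono) (rule Bn(1))
    then show "emeasure M (T n) \<le> C" using Bn(3)[of n] by simp
  qed
  finally show ?thesis .
qed

lemma pow_sum_le:
  fixes x y :: real
  assumes x: "x \<ge> 0" and y: "y \<ge> 0"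
  shows "(x + y) ^ Suc k \<le> 2 ^ k * (x ^ Suc k + y ^ Suc k)"
proof (induction k)
  case 0 then show ?case by simp
next
  case (Suc k)
  have key: "(x + y) * (x ^ Suc k + y ^ Suc k) \<le> 2 * (x ^ Suc (Suc k) + y ^ Suc (Suc k))"
  proof -
    have "0 \<le> (x - y) * (x ^ Suc k - y ^ Suc k)"
    proof (cases "x \<le> y")
      case True
      then have "x ^ Suc k \<le> y ^ Suc k" using x by (rule power_mono)
      then show ?thesis using True by (simp add: mult_nonpos_nonpos)
    next
      case False
      then have "y ^ Suc k \<le> x ^ Suc k" using y by (intro power_mono) auto
      then show ?thesis using False by simp
    qed
    then show ?thesis by (simp add: algebra_simps)
  qed
  have "(x + y) ^ Suc (Suc k) = (x + y) * (x + y) ^ Suc k" by simp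
  also have "\<dots> \<le> (x + y) * (2 ^ k * (x ^ Suc k + y ^ Suc k))"
    using Suc.IH x y by (intro mult_left_mono) auto
  also have "\<dots> = 2 ^ k * ((x + y) * (x ^ Suc k + y ^ Suc k))" by (simp add: algebra_simps)
  also have "\<dots> \<le> 2 ^ k * (2 * (x ^ Suc (Suc k) + y ^ Suc (Suc k)))"
    using key by (intro mult_left_mono) auto
  also have "\<dots> = 2 ^ Suc k * (x ^ Suc (Suc k) + y ^ Suc (Suc k))" by simp
  finally show ?case .
qed




lemma sum_split:
  fixes p q :: ereal
  assumes "p + q < ereal a" "ereal c \<le> q" "p \<noteq> -\<infinity>"
  shows "p < ereal (a - c)"
  using assms by (cases p; cases q) auto

lemma inf_conv_nonneg:
  fixes f g :: "'a::euclidean_space \<Rightarrow> ereal"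
  assumes mf: "Inf (range f) = ereal mf" and mg: "Inf (range g) = ereal mg"
    and s: "mf + mg \<ge> 0"
  shows "inf_conv f g x \<ge> 0"
  unfolding inf_conv_def
proof (rule INF_greatest)
  fix y
  have "ereal mf \<le> f (x - y)" using mf by (metis INF_lower UNIV_I)
  moreover have "ereal mg \<le> g y" using mg by (metis INF_lower UNIV_I)
  ultimately have "ereal mf + ereal mg \<le> f (x - y) + g y" by (rule add_mono)
  then show "0 \<le> f (x - y) + g y" using s by (simp add: order_trans[rotated])
qed

lemma emeasure_lebesgue_UNIV: "emeasure (lebesgue :: 'a::euclidean_space measure) UNIV = \<infinity>"
proof -
  have "UNIV \<in> sets (lborel :: 'a measure)" by simp
  then show ?thesis by (simp add: emeasure_completion) 
qed

lemma emeasure_lebesgue_borel: "A \<in> sets borel \<Longrightarrow> emeasure (lebesgue :: 'a::euclidean_space measure) A = emeasure lborel A"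
  by (simp add: emeasure_completion)

lemma cball_sum:
  fixes u v :: "'a::euclidean_space"
  assumes "u \<in> cball cf rf" "v \<in> cball cg rg"
  shows "u + v \<in> cball (cf + cg) (rf + rg)"
proof -
  have "dist (cf + cg) (u + v) = norm ((cf - u) + (cg - v))" by (simp add: dist_norm algebra_simps)
  also have "\<dots> \<le> norm (cf - u) + norm (cg - v)" by (rule norm_triangle_ineq)
  also have "\<dots> \<le> rf + rg" using assms by (simp add: dist_norm add_mono)
  finally show ?thesis by simp
qed

lemma PsiF_meas:
  assumes y: "young_function \<phi>"
  shows "(\<lambda>x::'a::euclidean_space. Phi \<phi> r (check f x - ereal m)) \<in> borel_measurable lebesgue"
proof -
  have "(\<lambda>x::'a. (\<lambda>s. Phi \<phi> r (gamma_minus f s - ereal m)) (norm x)) \<in> borel_measurable lebesgue"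
  proof (rule radial_meas)
    fix s s' :: real assume "s \<le> s'"
    then have "gamma_minus f s - ereal m \<le> gamma_minus f s' - ereal m"
      by (intro ereal_minus_mono gamma_mono) auto
    then show "Phi \<phi> r (gamma_minus f s' - ereal m) \<le> Phi \<phi> r (gamma_minus f s - ereal m)"
      by (rule Phi_antimono[OF y])
  qed
  then show ?thesis by (simp add: check_def)
qed

lemma PsiG_meas:
  assumes y: "young_function \<phi>"
  shows "(\<lambda>x::'a::euclidean_space. Phi \<phi> r (check f x + ereal m)) \<in> borel_measurable lebesgue"
proof -
  have "(\<lambda>x::'a. (\<lambda>s. Phi \<phi> r (gamma_minus f s + ereal m)) (norm x)) \<in> borel_measurable lebesgue"
  proof (rule radial_meas)
    fix s s' :: real assume "s \<le> s'"
    then have "gamma_minus f s + ereal m \<le> gamma_minus f s' + ereal m"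
      by (intro add_right_mono gamma_mono) auto
    then show "Phi \<phi> r (gamma_minus f s' + ereal m) \<le> Phi \<phi> r (gamma_minus f s + ereal m)"
      by (rule Phi_antimono[OF y])
  qed
  then show ?thesis by (simp add: check_def)
qed

lemma ball_meas_bound:
  fixes f :: "'a::euclidean_space \<Rightarrow> ereal" and U :: "'a set"
  assumes U: "U \<in> sets lebesgue"
    and sub: "\<And>x. ereal (norm x) < rho_minus f (ereal \<alpha>) \<Longrightarrow> x \<in> U"
    and rf: "rho_minus f (ereal \<alpha>) = ereal R" "R \<ge> 0"
  shows "ennreal (unit_ball_vol (DIM('a)) * R ^ DIM('a)) \<le> emeasure lebesgue U"
proof -
  have "ball (0::'a) R \<subseteq> U" using sub rf by auto
  then have "emeasure lebesgue (ball (0::'a) R) \<le> emeasure lebesgue U" using U by (rule emeasure_mono)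
  moreover have "emeasure lebesgue (ball (0::'a) R) = ennreal (unit_ball_vol (DIM('a)) * R ^ DIM('a))"
    using emeasure_ball[OF rf(2)] by (simp add: emeasure_lebesgue_borel)
  ultimately show ?thesis by simp
qed

lemma vol_combine:
  fixes rf rg :: real
  assumes "rf \<ge> 0" "rg \<ge> 0"
    and "ennreal (unit_ball_vol (DIM('a)) * rf ^ DIM('a)) \<le> P"
    and "ennreal (unit_ball_vol (DIM('a)) * rg ^ DIM('a)) \<le> Q"
  shows "ennreal (unit_ball_vol (DIM('a::euclidean_space)) * (rf + rg) ^ DIM('a)) \<le> (2::ennreal) ^ (DIM('a) - 1) * (P + Q)"
proof -
  let ?N = "DIM('a)" and ?w = "unit_ball_vol (DIM('a))"
  obtain k where k: "?N = Suc k" using DIM_positive[where 'a='a] by (cases "DIM('a)") auto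
  have w0: "?w \<ge> 0" by simp
  have "?w * (rf + rg) ^ ?N \<le> ?w * (2 ^ k * (rf ^ ?N + rg ^ ?N))"
    unfolding k by (intro mult_left_mono pow_sum_le) (use assms w0 in auto)
  also have "\<dots> = 2 ^ k * (?w * rf ^ ?N + ?w * rg ^ ?N)" by (simp add: algebra_simps)
  finally have "ennreal (?w * (rf + rg) ^ ?N) \<le> ennreal (2 ^ k * (?w * rf ^ ?N + ?w * rg ^ ?N))"
    by (rule ennreal_leI)
  also have "\<dots> = ennreal (2 ^ k) * (ennreal (?w * rf ^ ?N) + ennreal (?w * rg ^ ?N))"
    using assms by (simp add: ennreal_mult' ennreal_plus)
  also have "ennreal (2 ^ k) = (2::ennreal) ^ (?N - 1)" using k by (simp flip: ennreal_power)
  also have "(2::ennreal) ^ (?N - 1) * (ennreal (?w * rf ^ ?N) + ennreal (?w * rg ^ ?N)) \<le> (2::ennreal) ^ (?N - 1) * (P + Q)"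
    using assms by (intro mult_left_mono add_mono) auto
  finally show ?thesis .
qed

lemma minus_le_aux: "z \<le> ereal \<alpha> \<Longrightarrow> \<alpha> - m \<le> a \<Longrightarrow> z - ereal m \<le> ereal a"
  by (cases z) auto

lemma plus_le_aux: "z \<le> ereal \<beta> \<Longrightarrow> \<beta> + m \<le> a \<Longrightarrow> z + ereal m \<le> ereal a"
  by (cases z) auto

lemma pred_set_meas:
  assumes "F \<in> borel_measurable (lebesgue :: 'a::euclidean_space measure)"
  shows "{x. (c::ennreal) < F x} \<in> sets lebesgue"
proof -
  have "F -` {c<..} \<inter> space lebesgue \<in> sets lebesgue" by (rule measurable_sets[OF assms]) simp
  then show ?thesis by (simp add: vimage_def)
qed

context
  fixes f g :: "'a::euclidean_space \<Rightarrow> ereal" and mf mg :: real and \<phi> :: "ennreal \<Rightarrow> ennreal" and r t :: real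
  assumes f_range: "\<And>x. f x \<noteq> -\<infinity>" and g_range: "\<And>x. g x \<noteq> -\<infinity>"
    and mf: "Inf (range f) = ereal mf" and mg: "Inf (range g) = ereal mg"
    and sum_nonneg: "mf + mg \<ge> 0" and young: "young_function \<phi>" and r: "r > 0" and t: "t \<ge> 0"
begin

lemma key_measure:
  assumes Em: "E \<in> sets lebesgue" and ES: "E \<subseteq> {x. ennreal t < Phi \<phi> r (inf_conv f g x)}"
  shows "emeasure lebesgue E \<le> 2^(DIM('a)-1) *
    (emeasure lebesgue {x. ennreal t < Phi \<phi> r (check f x - ereal ((mf-mg)/2))}
     + emeasure lebesgue {x. ennreal t < Phi \<phi> r (check g x + ereal ((mf-mg)/2))})"
proof -
  define m where "m = (mf - mg) / 2"
  define UF where "UF = {x. ennreal t < Phi \<phi> r (check f x - ereal m)}"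
  define UG where "UG = {x. ennreal t < Phi \<phi> r (check g x + ereal m)}"
  define C where "C = (2::ennreal)^(DIM('a)-1) * (emeasure lebesgue UF + emeasure lebesgue UG)"
  define A where "A = {a. ennreal t < Phi \<phi> r (ereal a)}"
  define S where "S a = {w. \<exists>u v. w = u + v \<and> f u < ereal (a - mg) \<and> g v < ereal (a - mf)}" for a
  have UFm: "UF \<in> sets lebesgue" unfolding UF_def by (rule pred_set_meas[OF PsiF_meas[OF young]])
  have UGm: "UG \<in> sets lebesgue" unfolding UG_def by (rule pred_set_meas[OF PsiG_meas[OF young]])
  have Fbound: "x \<in> UF" if "ereal (norm x) < rho_minus f (ereal (a - mg))" "a \<in> A" for x a
  proof -
    have "check f x \<le> ereal (a - mg)" by (rule check_le[OF that(1)])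
    then have "check f x - ereal m \<le> ereal a"
      by (rule minus_le_aux) (use sum_nonneg in \<open>simp add: m_def\<close>)
    then have "Phi \<phi> r (ereal a) \<le> Phi \<phi> r (check f x - ereal m)" by (rule Phi_antimono[OF young])
    then show ?thesis using that(2) unfolding UF_def A_def by auto
  qed
  have Gbound: "x \<in> UG" if "ereal (norm x) < rho_minus g (ereal (a - mf))" "a \<in> A" for x a
  proof -
    have "check g x \<le> ereal (a - mf)" by (rule check_le[OF that(1)])
    then have "check g x + ereal m \<le> ereal a"
      by (rule plus_le_aux) (use sum_nonneg in \<open>simp add: m_def\<close>)
    then have "Phi \<phi> r (ereal a) \<le> Phi \<phi> r (check g x + ereal m)" by (rule Phi_antimono[OF young])
    then show ?thesis using that(2) unfolding UG_def A_def by auto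
  qed
  have K0: "(2::ennreal)^(DIM('a)-1) \<noteq> 0" by simp
  have "emeasure lebesgue E \<le> C"
  proof (rule cover_bound[where S=S and A=A])
    show "S a \<subseteq> S a'" if "a \<le> a'" for a a'
      unfolding S_def using that by (force intro: order_less_le_trans)
    show "a' \<in> A" if "a \<in> A" "a' \<le> a" for a a'
      using that Phi_antimono[OF young, of "ereal a'" "ereal a" r] unfolding A_def by auto
    show "\<exists>a'\<in>A. a < a'" if "a \<in> A" for a
      using Phi_right_open[OF young r] that unfolding A_def by auto
    show "E \<in> sets lebesgue" by (rule Em)
    show "E \<subseteq> (\<Union>a\<in>A. S a)"
    proof
      fix x assume "x \<in> E"
      then have tx: "ennreal t < Phi \<phi> r (inf_conv f g x)" using ES by auto
      have h0: "inf_conv f g x \<ge> 0" by (rule inf_conv_nonneg[OF mf mg sum_nonneg])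
      have "inf_conv f g x \<noteq> \<infinity>" using tx Phi_inf[OF young] by auto
      then obtain y where y: "inf_conv f g x = ereal y" using h0 by (cases "inf_conv f g x") auto
      obtain a where a: "a > y" "ennreal t < Phi \<phi> r (ereal a)"
        using Phi_right_open[OF young r] tx y by metis
      have "inf_conv f g x < ereal a" using y a by simp
      then obtain z where z: "f (x - z) + g z < ereal a" unfolding inf_conv_def by (auto simp: INF_less_iff)
      have gz: "ereal mg \<le> g z" using mg by (metis INF_lower UNIV_I)
      have fz: "ereal mf \<le> f (x - z)" using mf by (metis INF_lower UNIV_I)
      have "f (x - z) < ereal (a - mg)" by (rule sum_split[OF z gz f_range])
      moreover have "g z < ereal (a - mf)" by (rule sum_split[OF _ fz g_range]) (use z in \<open>simp add: add.commute\<close>)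
      ultimately have "x \<in> S a" unfolding S_def by (intro CollectI exI[of _ "x - z"] exI[of _ z]) auto
      then show "x \<in> (\<Union>a\<in>A. S a)" using a unfolding A_def by auto
    qed
    show "\<exists>B\<in>sets lebesgue. S a \<subseteq> B \<and> emeasure lebesgue B \<le> C" if aA: "a \<in> A" for a
    proof -
      define Fs where "Fs = {u. f u < ereal (a - mg)}"
      define Gs where "Gs = {v. g v < ereal (a - mf)}"
      have SFG: "S a = {w. \<exists>u v. w = u + v \<and> u \<in> Fs \<and> v \<in> Gs}" unfolding S_def Fs_def Gs_def by auto
      have rhoF: "rho_minus f (ereal (a - mg)) = enc_radius Fs" unfolding rho_minus_def Fs_def ..
      have rhoG: "rho_minus g (ereal (a - mf)) = enc_radius Gs" unfolding rho_minus_def Gs_def ..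
      show ?thesis
      proof (cases "Fs = {} \<or> Gs = {}")
        case True
        then have "S a = {}" unfolding SFG by auto
        then show ?thesis by (intro bexI[of _ "{}"]) auto
      next
        case ne: False
        show ?thesis
        proof (cases "bounded Fs \<and> bounded Gs")
          case False
          have "UF = UNIV \<or> UG = UNIV"
          proof (cases "bounded Fs")
            case False
            then have "rho_minus f (ereal (a - mg)) = \<infinity>" using rhoF enc_radius_unbounded by simp
            then have "UF = UNIV" using Fbound[OF _ aA] by auto
            then show ?thesis by simp
          next
            case True
            then have "\<not> bounded Gs" using False by simp
            then have "rho_minus g (ereal (a - mf)) = \<infinity>" using rhoG enc_radius_unbounded by simp
            then have "UG = UNIV" using Gbound[OF _ aA] by auto
            then show ?thesis by simp
          qed
          then have "emeasure lebesgue UF + emeasure lebesgue UG = \<infinity>"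
            using emeasure_lebesgue_UNIV by auto
          then have "C = \<infinity>" unfolding C_def using K0 by (simp add: ennreal_mult_eq_top_iff)
          then show ?thesis by (intro bexI[of _ UNIV]) auto
        next
          case True
          have Fne: "Fs \<noteq> {}" and Gne: "Gs \<noteq> {}" using ne by auto
          obtain cf rf where F: "rf \<ge> 0" "enc_radius Fs = ereal rf" "Fs \<subseteq> cball cf rf"
            using enclosing_ball_char[OF _ Fne] True by blast
          obtain cg rg where G: "rg \<ge> 0" "enc_radius Gs = ereal rg" "Gs \<subseteq> cball cg rg"
            using enclosing_ball_char[OF _ Gne] True by blast
          have SB: "S a \<subseteq> cball (cf + cg) (rf + rg)"
            unfolding SFG using F(3) G(3) cball_sum by blast
          have "emeasure lebesgue (cball (cf + cg) (rf + rg)) = ennreal (unit_ball_vol (DIM('a)) * (rf + rg) ^ DIM('a))"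
            using emeasure_cball[of "rf + rg" "cf + cg"] F(1) G(1) by (simp add: emeasure_lebesgue_borel)
          also have "\<dots> \<le> C" unfolding C_def
          proof (rule vol_combine[OF F(1) G(1)])
            show "ennreal (unit_ball_vol (DIM('a)) * rf ^ DIM('a)) \<le> emeasure lebesgue UF"
              by (rule ball_meas_bound[OF UFm _ _ F(1)]) (use Fbound[OF _ aA] rhoF F(2) in auto)
            show "ennreal (unit_ball_vol (DIM('a)) * rg ^ DIM('a)) \<le> emeasure lebesgue UG"
              by (rule ball_meas_bound[OF UGm _ _ G(1)]) (use Gbound[OF _ aA] rhoG G(2) in auto)
          qed
          finally show ?thesis using SB by (intro bexI[of _ "cball (cf + cg) (rf + rg)"]) auto
        qed
      qed
    qed
  qed
  then show ?thesis unfolding C_def UF_def UG_def m_def .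
qed

end




lemma integral_ineq:
  fixes f g :: "'a::euclidean_space \<Rightarrow> ereal" and mf mg :: real and \<phi> :: "ennreal \<Rightarrow> ennreal" and r :: real
  assumes f_range: "\<And>x. f x \<noteq> -\<infinity>" and g_range: "\<And>x. g x \<noteq> -\<infinity>"
    and mf: "Inf (range f) = ereal mf" and mg: "Inf (range g) = ereal mg"
    and sum_nonneg: "mf + mg \<ge> 0" and young: "young_function \<phi>" and r: "r > 0"
  shows "(\<integral>\<^sup>+x. Phi \<phi> r (inf_conv f g x) \<partial>lebesgue) \<le> 2^(DIM('a)-1) *
    ((\<integral>\<^sup>+x. Phi \<phi> r (check f x - ereal ((mf-mg)/2)) \<partial>lebesgue)
     + (\<integral>\<^sup>+x. Phi \<phi> r (check g x + ereal ((mf-mg)/2)) \<partial>lebesgue))"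
proof -
  define m where "m = (mf - mg) / 2"
  define PF where "PF x = Phi \<phi> r (check f x - ereal m)" for x
  define PG where "PG x = Phi \<phi> r (check g x + ereal m)" for x
  define K where "K = (2::ennreal)^(DIM('a)-1)"
  define muF where "muF t = emeasure lebesgue {x \<in> space lebesgue. ennreal t < PF x}" for t
  define muG where "muG t = emeasure lebesgue {x \<in> space lebesgue. ennreal t < PG x}" for t
  have PFm: "PF \<in> borel_measurable lebesgue" unfolding PF_def by (rule PsiF_meas[OF young])
  have PGm: "PG \<in> borel_measurable lebesgue" unfolding PG_def by (rule PsiG_meas[OF young])
  have sf: "sigma_finite_measure (lebesgue :: 'a measure)" by (rule sf_lebesgue)
  have muFm: "muF \<in> borel_measurable borel"
  proof (rule antimono_borel)
    fix s s' :: real assume "s \<le> s'"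
    then have "ennreal s \<le> ennreal s'" by (rule ennreal_leI)
    then have sub: "{x \<in> space lebesgue. ennreal s' < PF x} \<subseteq> {x \<in> space lebesgue. ennreal s < PF x}"
      by (auto intro: le_less_trans)
    have ms: "{x \<in> space lebesgue. ennreal s < PF x} \<in> sets lebesgue" using pred_set_meas[OF PFm] by simp
    show "muF s' \<le> muF s" unfolding muF_def using sub ms by (rule emeasure_mono)
  qed
  have muGm: "muG \<in> borel_measurable borel"
  proof (rule antimono_borel)
    fix s s' :: real assume "s \<le> s'"
    then have "ennreal s \<le> ennreal s'" by (rule ennreal_leI)
    then have sub: "{x \<in> space lebesgue. ennreal s' < PG x} \<subseteq> {x \<in> space lebesgue. ennreal s < PG x}"
      by (auto intro: le_less_trans)
    have ms: "{x \<in> space lebesgue. ennreal s < PG x} \<in> sets lebesgue" using pred_set_meas[OF PGm] by simp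
    show "muG s' \<le> muG s" unfolding muG_def using sub ms by (rule emeasure_mono)
  qed
  have LF: "(\<integral>\<^sup>+x. PF x \<partial>lebesgue) = (\<integral>\<^sup>+t. indicator {0..} t * muF t \<partial>lborel)"
    unfolding muF_def by (rule layer_cake[OF sf PFm])
  have LG: "(\<integral>\<^sup>+x. PG x \<partial>lebesgue) = (\<integral>\<^sup>+t. indicator {0..} t * muG t \<partial>lborel)"
    unfolding muG_def by (rule layer_cake[OF sf PGm])
  have "(\<integral>\<^sup>+x. Phi \<phi> r (inf_conv f g x) \<partial>lebesgue) \<le> K * ((\<integral>\<^sup>+x. PF x \<partial>lebesgue) + (\<integral>\<^sup>+x. PG x \<partial>lebesgue))"
    unfolding nn_integral_def[of lebesgue "\<lambda>x. Phi \<phi> r (inf_conv f g x)"]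
  proof (rule SUP_least)
    fix s assume "s \<in> {s. simple_function lebesgue s \<and> s \<le> (\<lambda>x. Phi \<phi> r (inf_conv f g x))}"
    then have s: "simple_function lebesgue s" "\<And>x. s x \<le> Phi \<phi> r (inf_conv f g x)"
      by (auto simp: le_fun_def)
    have sm: "s \<in> borel_measurable lebesgue" by (rule borel_measurable_simple_function[OF s(1)])
    have "integral\<^sup>S lebesgue s = (\<integral>\<^sup>+x. s x \<partial>lebesgue)"
      by (rule nn_integral_eq_simple_integral[OF s(1), symmetric])
    also have "\<dots> = (\<integral>\<^sup>+t. indicator {0..} t * emeasure lebesgue {x \<in> space lebesgue. ennreal t < s x} \<partial>lborel)"
      by (rule layer_cake[OF sf sm])
    also have "\<dots> \<le> (\<integral>\<^sup>+t. K * (indicator {0..} t * muF t) + K * (indicator {0..} t * muG t) \<partial>lborel)"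
    proof (rule nn_integral_mono)
      fix t :: real
      show "indicator {0..} t * emeasure lebesgue {x \<in> space lebesgue. ennreal t < s x}
            \<le> K * (indicator {0..} t * muF t) + K * (indicator {0..} t * muG t)"
      proof (cases "t \<ge> 0")
        case True
        have Em: "{x \<in> space lebesgue. ennreal t < s x} \<in> sets lebesgue"
          using pred_set_meas[OF sm] by simp
        have ES: "{x \<in> space lebesgue. ennreal t < s x} \<subseteq> {x. ennreal t < Phi \<phi> r (inf_conv f g x)}"
          using s(2) by (auto intro: less_le_trans)
        have "emeasure lebesgue {x \<in> space lebesgue. ennreal t < s x} \<le> K * (muF t + muG t)"
          using key_measure[OF f_range g_range mf mg sum_nonneg young r True Em ES]
          unfolding K_def muF_def muG_def PF_def PG_def m_def by simp
        then show ?thesis using True by (simp add: distrib_left)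
      qed simp
    qed
    also have "\<dots> = K * (\<integral>\<^sup>+t. indicator {0..} t * muF t \<partial>lborel) + K * (\<integral>\<^sup>+t. indicator {0..} t * muG t \<partial>lborel)"
      using muFm muGm by (simp add: nn_integral_add nn_integral_cmult)
    also have "\<dots> = K * ((\<integral>\<^sup>+x. PF x \<partial>lebesgue) + (\<integral>\<^sup>+x. PG x \<partial>lebesgue))"
      unfolding LF LG by (simp add: distrib_left)
    finally show "integral\<^sup>S lebesgue s \<le> K * ((\<integral>\<^sup>+x. PF x \<partial>lebesgue) + (\<integral>\<^sup>+x. PG x \<partial>lebesgue))" .
  qed
  then show ?thesis unfolding K_def PF_def PG_def m_def .
qed




lemma young_scale:
  assumes y: "young_function \<phi>" and c: "c \<le> 1"
  shows "\<phi> (c * x) \<le> c * \<phi> x"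
proof -
  have "\<phi> (c * x + (1 - c) * 0) \<le> c * \<phi> x + (1 - c) * \<phi> 0"
    using y c unfolding young_function_def by blast
  then show ?thesis using young_0[OF y] by simp
qed

lemma lux_member:
  assumes "r > 0" "(\<integral>\<^sup>+x. \<phi> (ennreal (1 / r) * u x) \<partial>lebesgue) \<le> 1"
  shows "lux_norm \<phi> (u :: 'a::euclidean_space \<Rightarrow> ennreal) \<le> ennreal r"
  unfolding lux_norm_def by (rule Inf_lower) (use assms in auto)

lemma lux_approx:
  assumes "lux_norm \<phi> (u :: 'a::euclidean_space \<Rightarrow> ennreal) < x"
  shows "\<exists>r. r > 0 \<and> (\<integral>\<^sup>+x. \<phi> (ennreal (1 / r) * u x) \<partial>lebesgue) \<le> 1 \<and> ennreal r < x"
  using assms unfolding lux_norm_def by (auto simp: Inf_less_iff)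

lemma scale_integral:
  fixes u :: "'a::euclidean_space \<Rightarrow> ennreal"
  assumes y: "young_function \<phi>" and ra: "ra > 0" and rr: "ra \<le> r"
    and meas: "(\<lambda>x. \<phi> (ennreal (1 / ra) * u x)) \<in> borel_measurable lebesgue"
    and one: "(\<integral>\<^sup>+x. \<phi> (ennreal (1 / ra) * u x) \<partial>lebesgue) \<le> 1"
  shows "(\<integral>\<^sup>+x. \<phi> (ennreal (1 / r) * u x) \<partial>lebesgue) \<le> ennreal (ra / r)"
proof -
  have r: "r > 0" using ra rr by simp
  have lam: "ennreal (ra / r) \<le> 1" using ra rr r by (simp add: ennreal_le_1 field_simps)
  have eq: "ennreal (1 / r) * u x = ennreal (ra / r) * (ennreal (1 / ra) * u x)" for x
  proof -
    have "ennreal (ra / r) * ennreal (1 / ra) = ennreal (1 / r)"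
      using ra r by (simp add: ennreal_mult'' [symmetric])
    then show ?thesis by (simp add: mult.assoc[symmetric])
  qed
  have "(\<integral>\<^sup>+x. \<phi> (ennreal (1 / r) * u x) \<partial>lebesgue) \<le> (\<integral>\<^sup>+x. ennreal (ra / r) * \<phi> (ennreal (1 / ra) * u x) \<partial>lebesgue)"
    by (intro nn_integral_mono) (simp add: eq young_scale[OF y lam])
  also have "\<dots> = ennreal (ra / r) * (\<integral>\<^sup>+x. \<phi> (ennreal (1 / ra) * u x) \<partial>lebesgue)"
    using meas by (rule nn_integral_cmult)
  also have "\<dots> \<le> ennreal (ra / r) * 1" using one by (intro mult_left_mono) auto
  finally show ?thesis by simp
qed

lemma lux_combine:
  fixes uh uF uG :: "'a::euclidean_space \<Rightarrow> ennreal" and K :: real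
  assumes y: "young_function \<phi>" and K: "K \<ge> 1"
    and ineq: "\<And>r. r > 0 \<Longrightarrow> (\<integral>\<^sup>+x. \<phi> (ennreal (1 / r) * uh x) \<partial>lebesgue) \<le>
         ennreal K * ((\<integral>\<^sup>+x. \<phi> (ennreal (1 / r) * uF x) \<partial>lebesgue) + (\<integral>\<^sup>+x. \<phi> (ennreal (1 / r) * uG x) \<partial>lebesgue))"
    and mF: "\<And>r. r > 0 \<Longrightarrow> (\<lambda>x. \<phi> (ennreal (1 / r) * uF x)) \<in> borel_measurable lebesgue"
    and mG: "\<And>r. r > 0 \<Longrightarrow> (\<lambda>x. \<phi> (ennreal (1 / r) * uG x)) \<in> borel_measurable lebesgue"
  shows "lux_norm \<phi> uh \<le> ennreal K * (lux_norm \<phi> uF + lux_norm \<phi> uG)"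
proof (cases "lux_norm \<phi> uF = top \<or> lux_norm \<phi> uG = top")
  case True
  have "ennreal K \<noteq> 0" using K by simp
  then have "ennreal K * (lux_norm \<phi> uF + lux_norm \<phi> uG) = top"
    using True by (auto simp: ennreal_mult_eq_top_iff)
  then show ?thesis by simp
next
  case False
  then obtain a0 b0 where ab: "lux_norm \<phi> uF = ennreal a0" "a0 \<ge> 0" "lux_norm \<phi> uG = ennreal b0" "b0 \<ge> 0"
    by (metis ennreal_cases)
  show ?thesis
  proof (rule ennreal_le_epsilon)
    fix e :: real assume e: "0 < e"
    define e' where "e' = e / (2 * K)"
    have e': "e' > 0" unfolding e'_def using e K by simp
    have "lux_norm \<phi> uF < ennreal (a0 + e')" using ab e' by (simp add: ennreal_less_iff)
    then obtain ra where ra: "ra > 0" "(\<integral>\<^sup>+x. \<phi> (ennreal (1 / ra) * uF x) \<partial>lebesgue) \<le> 1" "ennreal ra < ennreal (a0 + e')"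
      using lux_approx by blast
    have "lux_norm \<phi> uG < ennreal (b0 + e')" using ab e' by (simp add: ennreal_less_iff)
    then obtain rb where rb: "rb > 0" "(\<integral>\<^sup>+x. \<phi> (ennreal (1 / rb) * uG x) \<partial>lebesgue) \<le> 1" "ennreal rb < ennreal (b0 + e')"
      using lux_approx by blast
    have ra': "ra < a0 + e'" using ra(3) ra(1) by (simp del: ennreal_plus add: ennreal_less_iff)
    have rb': "rb < b0 + e'" using rb(3) rb(1) by (simp del: ennreal_plus add: ennreal_less_iff)
    define r where "r = K * (ra + rb)"
    have r: "r > 0" unfolding r_def using K ra rb by simp
    have rar: "ra \<le> r" unfolding r_def using K ra rb
      by (smt (verit, best) mult_le_cancel_right1 mult_nonneg_nonneg)
    have rbr: "rb \<le> r" unfolding r_def using K ra rb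
      by (smt (verit, best) mult_le_cancel_right1 mult_nonneg_nonneg)
    have "(\<integral>\<^sup>+x. \<phi> (ennreal (1 / r) * uh x) \<partial>lebesgue) \<le>
         ennreal K * ((\<integral>\<^sup>+x. \<phi> (ennreal (1 / r) * uF x) \<partial>lebesgue) + (\<integral>\<^sup>+x. \<phi> (ennreal (1 / r) * uG x) \<partial>lebesgue))"
      by (rule ineq[OF r])
    also have "\<dots> \<le> ennreal K * (ennreal (ra / r) + ennreal (rb / r))"
    proof -
      have iF: "(\<integral>\<^sup>+x. \<phi> (ennreal (1 / r) * uF x) \<partial>lebesgue) \<le> ennreal (ra / r)"
        by (rule scale_integral[OF y ra(1) rar mF[OF ra(1)] ra(2)])
      have iG: "(\<integral>\<^sup>+x. \<phi> (ennreal (1 / r) * uG x) \<partial>lebesgue) \<le> ennreal (rb / r)"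
        by (rule scale_integral[OF y rb(1) rbr mG[OF rb(1)] rb(2)])
      show ?thesis by (rule mult_left_mono[OF add_mono[OF iF iG]]) simp
    qed
    also have "\<dots> = ennreal (K * (ra / r + rb / r))"
    proof -
      have "ennreal (K * (ra / r + rb / r)) = ennreal K * ennreal (ra / r + rb / r)"
        using K ra rb r by (intro ennreal_mult) auto
      also have "ennreal (ra / r + rb / r) = ennreal (ra / r) + ennreal (rb / r)"
        using ra rb r by (intro ennreal_plus) auto
      finally show ?thesis by simp
    qed
    also have "K * (ra / r + rb / r) = 1"
    proof -
      have "ra / r + rb / r = (ra + rb) / r" by (simp add: add_divide_distrib)
      then have "K * (ra / r + rb / r) = (K * (ra + rb)) / r" by simp
      also have "\<dots> = 1" using r K ra(1) rb(1) unfolding r_def by simp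
      finally show ?thesis .
    qed
    finally have "lux_norm \<phi> uh \<le> ennreal r" using lux_member[OF r] by simp
    also have "ennreal r \<le> ennreal (K * (a0 + b0) + e)"
    proof (rule ennreal_leI)
      have "r \<le> K * (a0 + e' + (b0 + e'))" unfolding r_def using K ra' rb'
        by (intro mult_left_mono) auto
      also have "\<dots> = K * (a0 + b0) + e" unfolding e'_def using K by (simp add: field_simps)
      finally show "r \<le> K * (a0 + b0) + e" .
    qed
    also have "\<dots> = ennreal K * (lux_norm \<phi> uF + lux_norm \<phi> uG) + ennreal e"
    proof -
      have "ennreal (K * (a0 + b0) + e) = ennreal (K * (a0 + b0)) + ennreal e"
        using ab K e by (intro ennreal_plus) auto
      also have "ennreal (K * (a0 + b0)) = ennreal K * ennreal (a0 + b0)"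
        using ab K by (intro ennreal_mult) auto
      also have "ennreal (a0 + b0) = ennreal a0 + ennreal b0"
        using ab by (intro ennreal_plus) auto
      finally show ?thesis using ab by simp
    qed
    finally show "lux_norm \<phi> uh \<le> ennreal K * (lux_norm \<phi> uF + lux_norm \<phi> uG) + ennreal e" .
  qed
qed



theorem theorem19:
  fixes f g :: "'a::euclidean_space \<Rightarrow> ereal" and mf mg :: real
  assumes f_meas: "f \<in> borel_measurable borel" and g_meas: "g \<in> borel_measurable borel"
    and f_range: "\<And>x. f x \<noteq> -\<infinity>" and g_range: "\<And>x. g x \<noteq> -\<infinity>"
    and mf: "Inf (range f) = ereal mf" and mg: "Inf (range g) = ereal mg"
    and sum_nonneg: "mf + mg \<ge> 0"
  shows "(\<forall>x. inf_conv f g x \<ge> 0)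
    \<and> (\<forall>x. check f x - ereal ((mf - mg) / 2) \<ge> 0)
    \<and> (\<forall>x. check g x + ereal ((mf - mg) / 2) \<ge> 0)
    \<and> (\<forall>\<phi>. young_function \<phi> \<longrightarrow>
         lux_norm \<phi> (\<lambda>x. recip (inf_conv f g x))
           \<le> 2 ^ (DIM('a) - 1) *
              (lux_norm \<phi> (\<lambda>x. recip (check f x - ereal ((mf - mg) / 2)))
               + lux_norm \<phi> (\<lambda>x. recip (check g x + ereal ((mf - mg) / 2)))))"
proof (intro conjI allI impI)
  fix x
  show "inf_conv f g x \<ge> 0" by (rule inf_conv_nonneg[OF mf mg sum_nonneg])
next
  fix x
  have "ereal mf \<le> check f x" by (rule check_ge[OF mf])
  then show "check f x - ereal ((mf - mg) / 2) \<ge> 0"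
    using sum_nonneg by (cases "check f x") (auto simp: field_simps)
next
  fix x
  have "ereal mg \<le> check g x" by (rule check_ge[OF mg])
  then show "check g x + ereal ((mf - mg) / 2) \<ge> 0"
    using sum_nonneg by (cases "check g x") (auto simp: field_simps)
next
  fix \<phi> :: "ennreal \<Rightarrow> ennreal" assume y: "young_function \<phi>"
  have K: "(2::ennreal) ^ (DIM('a) - 1) = ennreal (2 ^ (DIM('a) - 1))"
    by (simp flip: ennreal_power)
  show "lux_norm \<phi> (\<lambda>x. recip (inf_conv f g x))
           \<le> 2 ^ (DIM('a) - 1) *
              (lux_norm \<phi> (\<lambda>x. recip (check f x - ereal ((mf - mg) / 2)))
               + lux_norm \<phi> (\<lambda>x. recip (check g x + ereal ((mf - mg) / 2))))"
    unfolding K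
  proof (rule lux_combine[OF y])
    show "(1::real) \<le> 2 ^ (DIM('a) - 1)" by simp
    fix r :: real assume r: "r > 0"
    show "(\<integral>\<^sup>+x. \<phi> (ennreal (1 / r) * recip (inf_conv f g x)) \<partial>lebesgue) \<le>
         ennreal (2 ^ (DIM('a) - 1)) * ((\<integral>\<^sup>+x. \<phi> (ennreal (1 / r) * recip (check f x - ereal ((mf - mg) / 2))) \<partial>lebesgue)
           + (\<integral>\<^sup>+x. \<phi> (ennreal (1 / r) * recip (check g x + ereal ((mf - mg) / 2))) \<partial>lebesgue))"
      using integral_ineq[OF f_range g_range mf mg sum_nonneg y r] unfolding Phi_def K .
  next
    fix r :: real assume r: "r > 0"
    show "(\<lambda>x. \<phi> (ennreal (1 / r) * recip (check f x - ereal ((mf - mg) / 2)))) \<in> borel_measurable lebesgue"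
      using PsiF_meas[OF y, of r f "(mf - mg) / 2"] unfolding Phi_def .
  next
    fix r :: real assume r: "r > 0"
    show "(\<lambda>x. \<phi> (ennreal (1 / r) * recip (check g x + ereal ((mf - mg) / 2)))) \<in> borel_measurable lebesgue"
      using PsiG_meas[OF y, of r g "(mf - mg) / 2"] unfolding Phi_def .
  qed
qed


end
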